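(* Let $G,R,M_\odot,\mu,k,N_A>0$, $\delta>0$, and let $\gamma$ be a positive integer. Set $C=\frac{1}{\gamma!}\prod_{i=1}^{\gamma}\left(\frac{3}{\delta}+i\right)$, $\rho(r)=\frac{3M_\odot}{4\pi R^3}C\left[1-(r/R)^\delta\right]^\gamma$, $M(r)=\int_0^r4\pi s^2\rho(s)\,ds$, $P(r)=\int_r^R GM(s)\rho(s)s^{-2}\,ds$, and define the temperature by the perfect gas law $T(r)=\frac{\mu\,P(r)}{kN_A\,\rho(r)}$ for $0\le r<R$. Then with $x=r/R\in[0,1)$, $$T(r)=3\frac{\mu}{kN_A}\frac{GM_\odot}{R}\,C\,\frac{1}{\delta^2}\,\frac{1}{(1-x^\delta)^\gamma}\sum_{m=0}^{\gamma}\frac{(-\gamma)_m}{m!\left(\frac{3}{\delta}+m\right)\left(\frac{2}{\delta}+m\right)}\left[\frac{\gamma!}{\left(\frac{2}{\delta}+m+1\right)_\gamma}-x^{m\delta+2}\,{}_2F_1\!\left(-\gamma,\frac{2}{\delta}+m;\frac{2}{\delta}+m+1;x^\delta\right)\right],$$ and moreover $T(r)\to0$ as $r\to R^-$.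
   Context: $(a)_m=a(a+1)\cdots(a+m-1)$, $(a)_0=1$, is the Pochhammer symbol. ${}_2F_1(a,b;c;z)=\sum_{k\ge0}\frac{(a)_k(b)_k}{(c)_k k!}z^k$ is Gauss' hypergeometric function. *)

theory Defs
  imports "HOL-Analysis.Analysis"
begin

definition hyp2F1 :: "real \<Rightarrow> real \<Rightarrow> real \<Rightarrow> real \<Rightarrow> real" where
  "hyp2F1 a b c z = (\<Sum>k. pochhammer a k * pochhammer b k / (pochhammer c k * fact k) * z ^ k)"

definition polyC :: "real \<Rightarrow> nat \<Rightarrow> real" where
  "polyC \<delta> \<gamma> = (1 / fact \<gamma>) * (\<Prod>i=1..\<gamma>. 3 / \<delta> + real i)"

definition dens :: "real \<Rightarrow> real \<Rightarrow> real \<Rightarrow> nat \<Rightarrow> real \<Rightarrow> real" where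
  "dens Msun R \<delta> \<gamma> r = 3 * Msun / (4 * pi * R ^ 3) * polyC \<delta> \<gamma> * (1 - (r / R) powr \<delta>) ^ \<gamma>"

definition mass :: "real \<Rightarrow> real \<Rightarrow> real \<Rightarrow> nat \<Rightarrow> real \<Rightarrow> real" where
  "mass Msun R \<delta> \<gamma> r = integral {0..r} (\<lambda>s. 4 * pi * s ^ 2 * dens Msun R \<delta> \<gamma> s)"

definition pres :: "real \<Rightarrow> real \<Rightarrow> real \<Rightarrow> real \<Rightarrow> nat \<Rightarrow> real \<Rightarrow> real" where
  "pres G Msun R \<delta> \<gamma> r =
     integral {r..R} (\<lambda>s. G * mass Msun R \<delta> \<gamma> s * dens Msun R \<delta> \<gamma> s / s ^ 2)"

definition temp :: "real \<Rightarrow> real \<Rightarrow> real \<Rightarrow> real \<Rightarrow> real \<Rightarrow> real \<Rightarrow> real \<Rightarrow> nat \<Rightarrow> real \<Rightarrow> real" where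
  "temp G Msun R \<mu> k NA \<delta> \<gamma> r =
     \<mu> * pres G Msun R \<delta> \<gamma> r / (k * NA * dens Msun R \<delta> \<gamma> r)"

end

theory Submission
  imports Defs
begin

lemma pint:
  fixes R a b p :: real
  assumes R: "R > 0" and a: "0 \<le> a" and ab: "a \<le> b" and p: "p \<ge> 0"
  shows "((\<lambda>s. (s/R) powr p) has_integral (R/(p+1)) * ((b/R) powr (p+1) - (a/R) powr (p+1))) {a..b}"
proof -
  let ?F = "\<lambda>s. (R/(p+1)) * (s/R) powr (p+1)"
  have "((\<lambda>s. (s/R) powr p) has_integral ?F b - ?F a) {a..b}"
  proof (rule fundamental_theorem_of_calculus_interior[OF ab])
    show "continuous_on {a..b} ?F"
      using a p R by (intro continuous_intros continuous_on_powr') auto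
  next
    fix x assume x: "x \<in> {a<..<b}"
    then have xp: "x/R > 0" using a R by auto
    have "((\<lambda>s. s/R) has_real_derivative 1/R) (at x)"
      using R by (auto intro!: derivative_eq_intros)
    from DERIV_fun_powr[OF this xp, of "p+1"]
    have "((\<lambda>s. (s/R) powr (p+1)) has_real_derivative (p+1) * (x/R) powr p * (1/R)) (at x)"
      by simp
    then have "(?F has_real_derivative (R/(p+1)) * ((p+1) * (x/R) powr p * (1/R))) (at x)"
      by (rule DERIV_cmult)
    moreover have "(R/(p+1)) * ((p+1) * (x/R) powr p * (1/R)) = (x/R) powr p"
      using R p by (simp add: field_simps add_nonneg_eq_0_iff)
    ultimately show "(?F has_vector_derivative (x/R) powr p) (at x)"
      by (simp add: has_real_derivative_iff_has_vector_derivative)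
  qed
  then show ?thesis by (simp add: right_diff_distrib)
qed

lemma pw1:
  fixes y d :: real assumes "0 \<le> y"
  shows "y powr p * (y powr d) ^ i = y powr (real i * d + p)"
proof (cases "y = 0")
  case False
  then have "y > 0" using assms by auto
  then have "(y powr d) ^ i = y powr (real i * d)"
    by (simp add: powr_realpow[symmetric] powr_powr mult.commute)
  then show ?thesis by (simp add: powr_add[symmetric] add.commute)
qed simp

lemma pw2:
  fixes y d :: real assumes "0 \<le> y"
  shows "y powr (real j * d + 3) * (y powr d) ^ i / y^2 = y powr (real (j+i) * d + 1)"
proof (cases "y = 0")
  case False
  then have y: "y > 0" using assms by auto
  have "y powr (real j * d + 3) * (y powr d) ^ i = y powr (real i * d + (real j * d + 3))"
    by (rule pw1[OF assms])
  also have "\<dots> = y powr (real (j+i) * d + 1) * y powr 2"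
    by (simp add: powr_add[symmetric] algebra_simps)
  also have "y powr 2 = y^2" using y by (simp add: powr_realpow[of y 2, simplified])
  finally show ?thesis using y by simp
qed simp

lemma binexp:
  fixes z :: real
  shows "(1 - z) ^ g = (\<Sum>i\<le>g. pochhammer (- real g) i / fact i * z ^ i)"
proof -
  have "(1 - z) ^ g = ((-z) + 1) ^ g" by simp
  also have "\<dots> = (\<Sum>i\<le>g. of_nat (g choose i) * (-z) ^ i * 1 ^ (g - i))"
    by (rule binomial_ring)
  also have "\<dots> = (\<Sum>i\<le>g. pochhammer (- real g) i / fact i * z ^ i)"
  proof (rule sum.cong[OF refl])
    fix i
    have "real (g choose i) = (-1)^i * pochhammer (- real g) i / fact i"
      by (simp add: binomial_gbinomial gbinomial_pochhammer)
    then show "of_nat (g choose i) * (-z) ^ i * 1 ^ (g - i) = pochhammer (- real g) i / fact i * z ^ i"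
      by (simp add: power_minus[of z] )
  qed
  finally show ?thesis .
qed

lemma combsum:
  fixes b :: real
  assumes "b > 0"
  shows "(\<Sum>i\<le>n. (-1)^i * real (n choose i) / (b + real i)) = fact n / pochhammer b (Suc n)"
  using assms
proof (induction n arbitrary: b)
  case 0
  then show ?case by simp
next
  case (Suc n)
  let ?S = "\<lambda>b. (\<Sum>i\<le>n. (-1)^i * real (n choose i) / (b + real i))"
  have b1: "b + 1 > 0" using Suc.prems by simp
  have "(\<Sum>i\<le>Suc n. (-1)^i * real (Suc n choose i) / (b + real i))
      = 1 / b + (\<Sum>i\<le>n. (-1)^(Suc i) * real (Suc n choose Suc i) / (b + real (Suc i)))"
    by (subst sum.atMost_Suc_shift) simp
  also have "(\<Sum>i\<le>n. (-1)^(Suc i) * real (Suc n choose Suc i) / (b + real (Suc i)))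
     = (\<Sum>i\<le>n. (-1)^(Suc i) * real (n choose Suc i) / (b + real (Suc i))) - ?S (b+1)"
    unfolding sum_subtractf[symmetric]
  proof (rule sum.cong[OF refl])
    fix x assume "x \<in> {..n}"
    have e: "b + 1 + real x = b + real (Suc x)" by simp
    have c: "real (Suc n choose Suc x) = real (n choose x) + real (n choose Suc x)" by simp
    show "(-1)^(Suc x) * real (Suc n choose Suc x) / (b + real (Suc x)) =
     (-1)^(Suc x) * real (n choose Suc x) / (b + real (Suc x)) - (-1)^x * real (n choose x) / (b + 1 + real x)"
      unfolding e c by (simp add: diff_divide_distrib add_divide_distrib algebra_simps)
  qed
  also have "1 / b + (\<Sum>i\<le>n. (-1)^(Suc i) * real (n choose Suc i) / (b + real (Suc i))) = ?S b"
  proof -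
    have "?S b = (\<Sum>i\<le>Suc n. (-1)^i * real (n choose i) / (b + real i))"
      by simp
    also have "\<dots> = 1 / b + (\<Sum>i\<le>n. (-1)^(Suc i) * real (n choose Suc i) / (b + real (Suc i)))"
      by (subst sum.atMost_Suc_shift) simp
    finally show ?thesis by simp
  qed
  ultimately have "(\<Sum>i\<le>Suc n. (-1)^i * real (Suc n choose i) / (b + real i)) = ?S b - ?S (b+1)"
    by simp
  also have "\<dots> = fact n / pochhammer b (Suc n) - fact n / pochhammer (b+1) (Suc n)"
    using Suc.IH[OF Suc.prems] Suc.IH[OF b1] by simp
  also have "\<dots> = fact (Suc n) / pochhammer b (Suc (Suc n))"
  proof -
    have p1: "pochhammer b (Suc (Suc n)) = pochhammer b (Suc n) * (b + real (Suc n))"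
      by (simp add: pochhammer_Suc)
    have p2: "pochhammer b (Suc (Suc n)) = b * pochhammer (b+1) (Suc n)"
      by (rule pochhammer_rec)
    have nz1: "pochhammer b (Suc n) \<noteq> 0" using Suc.prems by (simp add: pochhammer_eq_0_iff) 
    have nz2: "pochhammer (b+1) (Suc n) \<noteq> 0" using b1 by (simp add: pochhammer_eq_0_iff) 
    have nz: "pochhammer b (Suc (Suc n)) \<noteq> 0" using Suc.prems by (simp add: pochhammer_eq_0_iff)
    have "fact n / pochhammer b (Suc n) = fact n * (b + real (Suc n)) / pochhammer b (Suc (Suc n))"
    proof -
      have ne: "b + real (Suc n) \<noteq> 0" using Suc.prems by (smt (verit) of_nat_0_le_iff)
      show ?thesis unfolding p1 using ne by simp
    qed
    moreover have "fact n / pochhammer (b+1) (Suc n) = fact n * b / pochhammer b (Suc (Suc n))"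
      unfolding p2 using Suc.prems by simp
    ultimately show ?thesis using nz by (simp add: diff_divide_distrib[symmetric] algebra_simps)
  qed
  finally show ?case .
qed


lemma pochratio:
  fixes b :: real assumes "b > 0"
  shows "pochhammer b i / pochhammer (b+1) i = b / (b + real i)"
proof -
  have "pochhammer b (Suc i) = b * pochhammer (b+1) i" by (rule pochhammer_rec)
  moreover have "pochhammer b (Suc i) = pochhammer b i * (b + real i)" by (simp add: pochhammer_Suc)
  moreover have "pochhammer (b+1) i \<noteq> 0" using assms by (simp add: pochhammer_eq_0_iff)
  moreover have "b + real i \<noteq> 0" using assms by (smt (verit) of_nat_0_le_iff)
  ultimately show ?thesis by (simp add: field_simps)
qed

lemma hypfin:
  "hyp2F1 (- real g) b c z = (\<Sum>i\<le>g. pochhammer (- real g) i * pochhammer b i / (pochhammer c i * fact i) * z ^ i)"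
  unfolding hyp2F1_def
proof (rule suminf_finite)
  fix n assume "n \<notin> {..g}"
  then have "pochhammer (- real g) n = 0" by (auto simp: pochhammer_eq_0_iff)
  then show "pochhammer (- real g) n * pochhammer b n / (pochhammer c n * fact n) * z ^ n = 0" by simp
qed simp

lemma sumA:
  fixes d :: real assumes d: "d > 0"
  shows "(\<Sum>i\<le>g. pochhammer (- real g) i / fact i / (real (m+i) * d + 2))
     = fact g / (d * (2/d + real m) * pochhammer (2/d + real m + 1) g)"
proof -
  define b where "b = 2/d + real m"
  have b: "b > 0" using d unfolding b_def by (simp add: add_pos_nonneg)
  have "(\<Sum>i\<le>g. pochhammer (- real g) i / fact i / (real (m+i) * d + 2))
      = (\<Sum>i\<le>g. (1/d) * ((-1)^i * real (g choose i) / (b + real i)))"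
  proof (rule sum.cong[OF refl])
    fix i
    have "real (g choose i) = (-1)^i * pochhammer (- real g) i / fact i"
      by (simp add: binomial_gbinomial gbinomial_pochhammer)
    moreover have "real (m+i) * d + 2 = d * (b + real i)" using d by (simp add: b_def field_simps)
    ultimately show "pochhammer (- real g) i / fact i / (real (m+i) * d + 2) = (1/d) * ((-1)^i * real (g choose i) / (b + real i))"
      by simp
  qed
  also have "\<dots> = (1/d) * (fact g / pochhammer b (Suc g))"
    by (simp only: sum_distrib_left[symmetric] combsum[OF b])
  also have "pochhammer b (Suc g) = b * pochhammer (b+1) g" by (rule pochhammer_rec)
  finally show ?thesis by (simp add: b_def)
qed

lemma sumB:
  fixes d x :: real assumes d: "d > 0" and x: "x \<ge> 0"
  shows "(\<Sum>i\<le>g. pochhammer (- real g) i / fact i * x powr (real (m+i) * d + 2) / (real (m+i) * d + 2))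
     = x powr (real m * d + 2) * hyp2F1 (- real g) (2/d + real m) (2/d + real m + 1) (x powr d) / (d * (2/d + real m))"
proof -
  define b where "b = 2/d + real m"
  have b: "b > 0" using d unfolding b_def by (simp add: add_pos_nonneg)
  have "x powr (real m * d + 2) * hyp2F1 (- real g) b (b + 1) (x powr d) / (d * b)
     = (\<Sum>i\<le>g. x powr (real m * d + 2) * (pochhammer (- real g) i * pochhammer b i / (pochhammer (b+1) i * fact i) * (x powr d) ^ i) / (d * b))"
    by (simp add: hypfin sum_distrib_left sum_divide_distrib)
  also have "\<dots> = (\<Sum>i\<le>g. pochhammer (- real g) i / fact i * x powr (real (m+i) * d + 2) / (real (m+i) * d + 2))"
  proof (rule sum.cong[OF refl])
    fix i
    have e1: "x powr (real m * d + 2) * (x powr d) ^ i = x powr (real (m+i) * d + 2)"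
      using pw1[OF x, of "real m * d + 2" d i] by (simp add: algebra_simps)
    have e2: "pochhammer b i / pochhammer (b+1) i = b / (b + real i)" by (rule pochratio[OF b])
    have e3: "real (m+i) * d + 2 = d * (b + real i)" using d by (simp add: b_def field_simps)
    have nz: "b + real i \<noteq> 0" using b by (smt (verit) of_nat_0_le_iff)
    have "x powr (real m * d + 2) * (pochhammer (- real g) i * pochhammer b i / (pochhammer (b+1) i * fact i) * (x powr d) ^ i) / (d * b)
       = pochhammer (- real g) i / fact i * (x powr (real m * d + 2) * (x powr d) ^ i) * (pochhammer b i / pochhammer (b+1) i) / (d * b)"
      by (simp add: field_simps)
    also have "\<dots> = pochhammer (- real g) i / fact i * x powr (real (m+i) * d + 2) / (real (m+i) * d + 2)"
    proof -
      have q: "b / (b + real i) / (d * b) = 1 / (d * (b + real i))" using b by simp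
      show ?thesis unfolding e1 e2 e3
        by (metis (no_types, lifting) q times_divide_eq_right mult.right_neutral)
    qed
    finally show "x powr (real m * d + 2) * (pochhammer (- real g) i * pochhammer b i / (pochhammer (b+1) i * fact i) * (x powr d) ^ i) / (d * b)
       = pochhammer (- real g) i / fact i * x powr (real (m+i) * d + 2) / (real (m+i) * d + 2)" .
  qed
  finally show ?thesis by (simp add: b_def add.assoc)
qed


lemma perm:
  fixes d x :: real assumes d: "d > 0" and x: "x \<ge> 0"
  shows "pochhammer (- real g) m / fact m / (real m * d + 3) *
     (\<Sum>i\<le>g. pochhammer (- real g) i / fact i / (real (m+i) * d + 2) * (1 - x powr (real (m+i) * d + 2)))
   = (1 / d^2) * (pochhammer (- real g) m / (fact m * (3/d + real m) * (2/d + real m))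
      * (fact g / pochhammer (2/d + real m + 1) g
         - x powr (real m * d + 2) * hyp2F1 (- real g) (2/d + real m) (2/d + real m + 1) (x powr d)))"
proof -
  have "(\<Sum>i\<le>g. pochhammer (- real g) i / fact i / (real (m+i) * d + 2) * (1 - x powr (real (m+i) * d + 2)))
    = (\<Sum>i\<le>g. pochhammer (- real g) i / fact i / (real (m+i) * d + 2))
      - (\<Sum>i\<le>g. pochhammer (- real g) i / fact i * x powr (real (m+i) * d + 2) / (real (m+i) * d + 2))"
    unfolding sum_subtractf[symmetric] by (rule sum.cong[OF refl]) (simp add: right_diff_distrib diff_divide_distrib)
  also have "\<dots> = fact g / (d * (2/d + real m) * pochhammer (2/d + real m + 1) g)
     - x powr (real m * d + 2) * hyp2F1 (- real g) (2/d + real m) (2/d + real m + 1) (x powr d) / (d * (2/d + real m))"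
    by (simp only: sumA[OF d] sumB[OF d x])
  finally have e: "(\<Sum>i\<le>g. pochhammer (- real g) i / fact i / (real (m+i) * d + 2) * (1 - x powr (real (m+i) * d + 2)))
     = (fact g / pochhammer (2/d + real m + 1) g
         - x powr (real m * d + 2) * hyp2F1 (- real g) (2/d + real m) (2/d + real m + 1) (x powr d)) / (d * (2/d + real m))"
    by (simp add: diff_divide_distrib)
  have b: "2/d + real m > 0" "3/d + real m > 0" using d by (simp_all add: add_pos_nonneg)
  have e3: "real m * d + 3 = d * (3/d + real m)" using d by (simp add: field_simps)
  show ?thesis unfolding e e3 using d b by (simp add: field_simps power2_eq_square)
qed


lemma sqpowr: "0 \<le> (y::real) \<Longrightarrow> y powr 2 = y^2"
  by (cases "y = 0") (simp_all add: powr_realpow[of y 2, simplified])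

lemma dens_exp:
  "dens Msun R \<delta> \<gamma> s = 3 * Msun / (4 * pi * R ^ 3) * polyC \<delta> \<gamma> *
     (\<Sum>i\<le>\<gamma>. pochhammer (- real \<gamma>) i / fact i * ((s/R) powr \<delta>) ^ i)"
  unfolding dens_def by (simp add: binexp)

lemma mass_hi:
  assumes R: "R > 0" and r: "r \<ge> 0" and d: "\<delta> > 0"
  shows "((\<lambda>s. 4 * pi * s ^ 2 * dens Msun R \<delta> \<gamma> s) has_integral
     3 * Msun * polyC \<delta> \<gamma> * (\<Sum>j\<le>\<gamma>. pochhammer (- real \<gamma>) j / fact j / (real j * \<delta> + 3) * (r/R) powr (real j * \<delta> + 3))) {0..r}"
proof -
  define K where "K = 4 * pi * (3 * Msun / (4 * pi * R ^ 3)) * polyC \<delta> \<gamma> * R^2"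
  have hi: "((\<lambda>s. \<Sum>j\<le>\<gamma>. (K * (pochhammer (- real \<gamma>) j / fact j)) * (s/R) powr (real j * \<delta> + 2)) has_integral
      (\<Sum>j\<le>\<gamma>. (K * (pochhammer (- real \<gamma>) j / fact j)) * ((R/(real j * \<delta> + 2 + 1)) * ((r/R) powr (real j * \<delta> + 2 + 1) - (0/R) powr (real j * \<delta> + 2 + 1))))) {0..r}"
    using R r d by (intro has_integral_sum has_integral_mult_right pint) auto
  have eq: "4 * pi * s ^ 2 * dens Msun R \<delta> \<gamma> s = (\<Sum>j\<le>\<gamma>. (K * (pochhammer (- real \<gamma>) j / fact j)) * (s/R) powr (real j * \<delta> + 2))"
    if s: "s \<in> {0..r}" for s
  proof -
    have y: "s/R \<ge> 0" using s R by auto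
    have s2: "s^2 = R^2 * (s/R)^2" using R by (simp add: field_simps)
    have "4 * pi * s ^ 2 * dens Msun R \<delta> \<gamma> s = (\<Sum>j\<le>\<gamma>. (K * (pochhammer (- real \<gamma>) j / fact j)) * ((s/R) powr 2 * ((s/R) powr \<delta>) ^ j))"
    proof -
      have "4 * pi * s ^ 2 * dens Msun R \<delta> \<gamma> s = K * (s/R)^2 * (\<Sum>j\<le>\<gamma>. pochhammer (- real \<gamma>) j / fact j * ((s/R) powr \<delta>) ^ j)"
        unfolding dens_exp s2 K_def by (simp add: algebra_simps)
      also have "\<dots> = (\<Sum>j\<le>\<gamma>. (K * (pochhammer (- real \<gamma>) j / fact j)) * ((s/R)^2 * ((s/R) powr \<delta>) ^ j))"
        unfolding sum_distrib_left by (rule sum.cong[OF refl]) (simp add: algebra_simps)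
      finally show ?thesis unfolding sqpowr[OF y] .
    qed
    also have "\<dots> = (\<Sum>j\<le>\<gamma>. (K * (pochhammer (- real \<gamma>) j / fact j)) * (s/R) powr (real j * \<delta> + 2))"
      using pw1[OF y] by simp
    finally show ?thesis .
  qed
  have KR: "K * R = 3 * Msun * polyC \<delta> \<gamma>" using R unfolding K_def by (simp add: field_simps power2_eq_square power3_eq_cube)
  have val0: "(\<Sum>j\<le>\<gamma>. (K * (pochhammer (- real \<gamma>) j / fact j)) * ((R/(real j * \<delta> + 2 + 1)) * ((r/R) powr (real j * \<delta> + 2 + 1) - (0/R) powr (real j * \<delta> + 2 + 1))))
     = (K * R) * (\<Sum>j\<le>\<gamma>. pochhammer (- real \<gamma>) j / fact j / (real j * \<delta> + 3) * (r/R) powr (real j * \<delta> + 3))"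
    unfolding sum_distrib_left by (rule sum.cong[OF refl]) (simp add: algebra_simps)
  have val: "(\<Sum>j\<le>\<gamma>. (K * (pochhammer (- real \<gamma>) j / fact j)) * ((R/(real j * \<delta> + 2 + 1)) * ((r/R) powr (real j * \<delta> + 2 + 1) - (0/R) powr (real j * \<delta> + 2 + 1))))
     = 3 * Msun * polyC \<delta> \<gamma> * (\<Sum>j\<le>\<gamma>. pochhammer (- real \<gamma>) j / fact j / (real j * \<delta> + 3) * (r/R) powr (real j * \<delta> + 3))"
    using val0 unfolding KR .
  show ?thesis using has_integral_eq[OF _ hi, of "\<lambda>s. 4 * pi * s ^ 2 * dens Msun R \<delta> \<gamma> s"] eq val by simp
qed

lemma mass_eq:
  assumes R: "R > 0" and r: "r \<ge> 0" and d: "\<delta> > 0"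
  shows "mass Msun R \<delta> \<gamma> r =
     3 * Msun * polyC \<delta> \<gamma> * (\<Sum>j\<le>\<gamma>. pochhammer (- real \<gamma>) j / fact j / (real j * \<delta> + 3) * (r/R) powr (real j * \<delta> + 3))"
  unfolding mass_def using integral_unique[OF mass_hi[OF assms]] .


lemma pres_hi:
  assumes R: "R > 0" and r: "r \<ge> 0" "r \<le> R" and d: "\<delta> > 0"
  shows "((\<lambda>s. G * mass Msun R \<delta> \<gamma> s * dens Msun R \<delta> \<gamma> s / s ^ 2) has_integral
     G * 3 * Msun * polyC \<delta> \<gamma> * (3 * Msun / (4 * pi * R ^ 3) * polyC \<delta> \<gamma>) / R *
     (\<Sum>j\<le>\<gamma>. pochhammer (- real \<gamma>) j / fact j / (real j * \<delta> + 3) *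
        (\<Sum>i\<le>\<gamma>. pochhammer (- real \<gamma>) i / fact i / (real (j+i) * \<delta> + 2) * (1 - (r/R) powr (real (j+i) * \<delta> + 2))))) {r..R}"
proof -
  define K where "K = G * (3 * Msun * polyC \<delta> \<gamma>) * (3 * Msun / (4 * pi * R ^ 3) * polyC \<delta> \<gamma>) / R^2"
  define a where "a j = pochhammer (- real \<gamma>) j / fact j / (real j * \<delta> + 3)" for j
  define c where "c i = pochhammer (- real \<gamma>) i / (fact i :: real)" for i
  have hi: "((\<lambda>s. K * (\<Sum>j\<le>\<gamma>. \<Sum>i\<le>\<gamma>. (a j * c i) * (s/R) powr (real (j+i) * \<delta> + 1))) has_integral
      K * (\<Sum>j\<le>\<gamma>. \<Sum>i\<le>\<gamma>. (a j * c i) * ((R/(real (j+i) * \<delta> + 1 + 1)) * ((R/R) powr (real (j+i) * \<delta> + 1 + 1) - (r/R) powr (real (j+i) * \<delta> + 1 + 1))))) {r..R}"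
    using R r d by (intro has_integral_mult_right has_integral_sum pint) auto
  have eq: "G * mass Msun R \<delta> \<gamma> s * dens Msun R \<delta> \<gamma> s / s ^ 2 = K * (\<Sum>j\<le>\<gamma>. \<Sum>i\<le>\<gamma>. (a j * c i) * (s/R) powr (real (j+i) * \<delta> + 1))"
    if s: "s \<in> {r..R}" for s
  proof -
    have s0: "s \<ge> 0" using s r by auto
    have y: "s/R \<ge> 0" using s0 R by auto
    have s2: "s^2 = R^2 * (s/R)^2" using R by (simp add: field_simps)
    define A where "A = (\<Sum>j\<le>\<gamma>. a j * (s/R) powr (real j * \<delta> + 3))"
    define B where "B = (\<Sum>i\<le>\<gamma>. c i * ((s/R) powr \<delta>) ^ i)"
    have m: "mass Msun R \<delta> \<gamma> s = 3 * Msun * polyC \<delta> \<gamma> * A"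
      unfolding mass_eq[OF R s0 d] A_def a_def ..
    have dd: "dens Msun R \<delta> \<gamma> s = 3 * Msun / (4 * pi * R ^ 3) * polyC \<delta> \<gamma> * B"
      unfolding dens_exp B_def c_def ..
    have "G * mass Msun R \<delta> \<gamma> s * dens Msun R \<delta> \<gamma> s / s ^ 2 = K * (A * B / (s/R)^2)"
      unfolding m dd s2 K_def by (simp add: algebra_simps)
    also have "A * B / (s/R)^2 = (\<Sum>j\<le>\<gamma>. \<Sum>i\<le>\<gamma>. (a j * c i) * ((s/R) powr (real j * \<delta> + 3) * ((s/R) powr \<delta>) ^ i / (s/R)^2))"
      unfolding A_def B_def sum_product sum_divide_distrib
      by (rule sum.cong[OF refl], rule sum.cong[OF refl]) (simp add: algebra_simps)
    also have "\<dots> = (\<Sum>j\<le>\<gamma>. \<Sum>i\<le>\<gamma>. (a j * c i) * (s/R) powr (real (j+i) * \<delta> + 1))"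
      using pw2[OF y] by simp
    finally show ?thesis .
  qed
  have val: "K * (\<Sum>j\<le>\<gamma>. \<Sum>i\<le>\<gamma>. (a j * c i) * ((R/(real (j+i) * \<delta> + 1 + 1)) * ((R/R) powr (real (j+i) * \<delta> + 1 + 1) - (r/R) powr (real (j+i) * \<delta> + 1 + 1))))
     = (K * R) * (\<Sum>j\<le>\<gamma>. a j * (\<Sum>i\<le>\<gamma>. c i / (real (j+i) * \<delta> + 2) * (1 - (r/R) powr (real (j+i) * \<delta> + 2))))"
    unfolding sum_distrib_left mult.assoc
    by (rule sum.cong[OF refl], rule sum.cong[OF refl]) (use R in \<open>simp add: algebra_simps\<close>)
  have KR: "K * R = G * 3 * Msun * polyC \<delta> \<gamma> * (3 * Msun / (4 * pi * R ^ 3) * polyC \<delta> \<gamma>) / R"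
    using R unfolding K_def by (simp add: field_simps power2_eq_square)
  show ?thesis using has_integral_eq[OF _ hi, of "\<lambda>s. G * mass Msun R \<delta> \<gamma> s * dens Msun R \<delta> \<gamma> s / s ^ 2"] eq val
    unfolding KR a_def c_def by simp
qed


lemma polyC_pos: "\<delta> > 0 \<Longrightarrow> polyC \<delta> \<gamma> > 0"
  unfolding polyC_def by (intro mult_pos_pos prod_pos) (auto intro!: add_pos_nonneg)

theorem mainTheorem5:
  fixes G R Msun \<mu> k NA \<delta> :: real and \<gamma> :: nat
  assumes "G > 0" "R > 0" "Msun > 0" "\<mu> > 0" "k > 0" "NA > 0" "\<delta> > 0" "\<gamma> > 0"
  shows "(\<forall>r. 0 \<le> r \<and> r < R \<longrightarrow>
           (let x = r / R in
            temp G Msun R \<mu> k NA \<delta> \<gamma> r =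
              3 * (\<mu> / (k * NA)) * (G * Msun / R) * polyC \<delta> \<gamma> * (1 / \<delta> ^ 2)
              * (1 / (1 - x powr \<delta>) ^ \<gamma>)
              * (\<Sum>m=0..\<gamma>. pochhammer (- real \<gamma>) m
                   / (fact m * (3 / \<delta> + real m) * (2 / \<delta> + real m))
                   * (fact \<gamma> / pochhammer (2 / \<delta> + real m + 1) \<gamma>
                      - x powr (real m * \<delta> + 2)
                        * hyp2F1 (- real \<gamma>) (2 / \<delta> + real m) (2 / \<delta> + real m + 1) (x powr \<delta>)))))
         \<and> ((temp G Msun R \<mu> k NA \<delta> \<gamma>) \<longlongrightarrow> 0) (at_left R)"
proof -
  note G = assms(1) and R = assms(2) and M = assms(3) and mu = assms(4) and kk = assms(5)
    and NA = assms(6) and d = assms(7)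
  define C where "C = polyC \<delta> \<gamma>"
  define \<rho> where "\<rho> = 3 * Msun / (4 * pi * R ^ 3)"
  have C: "C > 0" unfolding C_def using polyC_pos[OF d] .
  have rho: "\<rho> > 0" unfolding \<rho>_def using M R by simp
  have densr: "dens Msun R \<delta> \<gamma> r = \<rho> * C * (1 - (r/R) powr \<delta>) ^ \<gamma>" for r
    unfolding dens_def \<rho>_def C_def ..
  have D: "(1 - (r/R) powr \<delta>) > 0" if "0 \<le> r" "r < R" for r
  proof -
    have "(r/R) powr \<delta> < 1 powr \<delta>"
      using that R d by (intro powr_less_mono2) auto
    then show ?thesis by simp
  qed
  have part1: "temp G Msun R \<mu> k NA \<delta> \<gamma> r =
              3 * (\<mu> / (k * NA)) * (G * Msun / R) * polyC \<delta> \<gamma> * (1 / \<delta> ^ 2)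
              * (1 / (1 - (r/R) powr \<delta>) ^ \<gamma>)
              * (\<Sum>m=0..\<gamma>. pochhammer (- real \<gamma>) m
                   / (fact m * (3 / \<delta> + real m) * (2 / \<delta> + real m))
                   * (fact \<gamma> / pochhammer (2 / \<delta> + real m + 1) \<gamma>
                      - (r/R) powr (real m * \<delta> + 2)
                        * hyp2F1 (- real \<gamma>) (2 / \<delta> + real m) (2 / \<delta> + real m + 1) ((r/R) powr \<delta>)))"
    if r: "0 \<le> r" "r < R" for r
  proof -
    define x where "x = r / R"
    have x: "x \<ge> 0" using r R by (simp add: x_def)
    define T where "T m = pochhammer (- real \<gamma>) m
                   / (fact m * (3 / \<delta> + real m) * (2 / \<delta> + real m))
                   * (fact \<gamma> / pochhammer (2 / \<delta> + real m + 1) \<gamma>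
                      - x powr (real m * \<delta> + 2)
                        * hyp2F1 (- real \<gamma>) (2 / \<delta> + real m) (2 / \<delta> + real m + 1) (x powr \<delta>))" for m
    have S: "(\<Sum>j\<le>\<gamma>. pochhammer (- real \<gamma>) j / fact j / (real j * \<delta> + 3) *
        (\<Sum>i\<le>\<gamma>. pochhammer (- real \<gamma>) i / fact i / (real (j+i) * \<delta> + 2) * (1 - x powr (real (j+i) * \<delta> + 2))))
        = (1 / \<delta>^2) * (\<Sum>m=0..\<gamma>. T m)"
    proof -
      have "(\<Sum>j\<le>\<gamma>. pochhammer (- real \<gamma>) j / fact j / (real j * \<delta> + 3) *
        (\<Sum>i\<le>\<gamma>. pochhammer (- real \<gamma>) i / fact i / (real (j+i) * \<delta> + 2) * (1 - x powr (real (j+i) * \<delta> + 2))))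
        = (\<Sum>m\<le>\<gamma>. (1 / \<delta>^2) * T m)"
        unfolding T_def by (rule sum.cong[OF refl]) (rule perm[OF d x])
      also have "\<dots> = (1 / \<delta>^2) * (\<Sum>m=0..\<gamma>. T m)"
        by (simp only: atLeast0AtMost sum_distrib_left)
      finally show ?thesis .
    qed
    have p: "pres G Msun R \<delta> \<gamma> r = G * 3 * Msun * C * (\<rho> * C) / R * ((1 / \<delta>^2) * (\<Sum>m=0..\<gamma>. T m))"
      unfolding pres_def using integral_unique[OF pres_hi[OF R r(1) _ d, of G Msun \<gamma>]] r S
      unfolding x_def C_def \<rho>_def by simp
    have Dx: "1 - x powr \<delta> > 0" using D[OF r] by (simp add: x_def)
    have "temp G Msun R \<mu> k NA \<delta> \<gamma> r = \<mu> * (G * 3 * Msun * C * (\<rho> * C) / R * ((1 / \<delta>^2) * (\<Sum>m=0..\<gamma>. T m)))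
         / (k * NA * (\<rho> * C * (1 - x powr \<delta>) ^ \<gamma>))"
      unfolding temp_def p densr x_def ..
    also have "\<dots> = 3 * (\<mu> / (k * NA)) * (G * Msun / R) * C * (1 / \<delta> ^ 2)
              * (1 / (1 - x powr \<delta>) ^ \<gamma>) * (\<Sum>m=0..\<gamma>. T m)"
      using C rho Dx kk NA R by (simp add: field_simps)
    finally show ?thesis unfolding T_def x_def C_def .
  qed
  have part2: "((temp G Msun R \<mu> k NA \<delta> \<gamma>) \<longlongrightarrow> 0) (at_left R)"
  proof -
    define B where "B = 3 * Msun * C * (\<Sum>j\<le>\<gamma>. \<bar>pochhammer (- real \<gamma>) j / fact j / (real j * \<delta> + 3)\<bar>)"
    have mB: "\<bar>mass Msun R \<delta> \<gamma> s\<bar> \<le> B" if s: "0 \<le> s" "s \<le> R" for s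
    proof -
      have "\<bar>mass Msun R \<delta> \<gamma> s\<bar> = 3 * Msun * C * \<bar>\<Sum>j\<le>\<gamma>. pochhammer (- real \<gamma>) j / fact j / (real j * \<delta> + 3) * (s/R) powr (real j * \<delta> + 3)\<bar>"
        unfolding mass_eq[OF R s(1) d] C_def using M polyC_pos[OF d, of \<gamma>] by (simp add: abs_mult abs_of_pos)
      also have "\<dots> \<le> B" unfolding B_def
      proof (intro mult_left_mono order.trans[OF sum_abs] sum_mono)
        fix j assume "j \<in> {..\<gamma>}"
        have "\<bar>(s/R) powr (real j * \<delta> + 3)\<bar> \<le> 1"
          using s R d by (simp, intro powr_le1) (auto simp: add_nonneg_nonneg)
        then show "\<bar>pochhammer (- real \<gamma>) j / fact j / (real j * \<delta> + 3) * (s/R) powr (real j * \<delta> + 3)\<bar>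
            \<le> \<bar>pochhammer (- real \<gamma>) j / fact j / (real j * \<delta> + 3)\<bar>"
          by (metis abs_ge_zero abs_mult mult_left_le)
      qed (use M C in auto)
      finally show ?thesis .
    qed
    have B0: "B \<ge> 0" unfolding B_def using M C by (simp add: sum_nonneg)
    have bound: "\<bar>temp G Msun R \<mu> k NA \<delta> \<gamma> r\<bar> \<le> \<mu> * (G * B / (R/2)^2 * (R - r)) / (k * NA)"
      if r: "R/2 < r" "r < R" for r
    proof -
      have r0: "0 \<le> r" using r R by simp
      have dr: "dens Msun R \<delta> \<gamma> r > 0" unfolding densr using rho C D[OF r0 r(2)] by simp
      define Bd where "Bd = G * B * dens Msun R \<delta> \<gamma> r / (R/2)^2"
      have hi: "((\<lambda>s. G * mass Msun R \<delta> \<gamma> s * dens Msun R \<delta> \<gamma> s / s ^ 2) has_integral pres G Msun R \<delta> \<gamma> r) {r..R}"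
        unfolding pres_def using integral_unique[OF pres_hi[OF R r0 _ d, of G Msun \<gamma>]] pres_hi[OF R r0 _ d, of G Msun \<gamma>] r by simp
      have pb: "\<bar>pres G Msun R \<delta> \<gamma> r\<bar> \<le> Bd * (R - r)"
      proof -
        have "norm (pres G Msun R \<delta> \<gamma> r) \<le> Bd * Henstock_Kurzweil_Integration.content {r..R}"
        proof (rule has_integral_bound_real[OF _ _ hi, where S="{}"])
          show "0 \<le> Bd" unfolding Bd_def using G B0 dr by simp
        next
          fix s assume s: "s \<in> {r..R} - {}"
          then have s0: "0 \<le> s" "s \<le> R" "r \<le> s" using r0 by auto
          have ys: "0 \<le> s/R" "s/R \<le> 1" using s0 R by auto
          have dsr: "dens Msun R \<delta> \<gamma> s \<le> dens Msun R \<delta> \<gamma> r"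
          proof -
            have "(r/R) powr \<delta> \<le> (s/R) powr \<delta>" using s0 r0 R d by (intro powr_mono2) (auto simp: divide_right_mono)
            moreover have "(s/R) powr \<delta> \<le> 1" using ys d by (intro powr_le1) auto
            ultimately have "(1 - (s/R) powr \<delta>) ^ \<gamma> \<le> (1 - (r/R) powr \<delta>) ^ \<gamma>"
              by (intro power_mono) auto
            then show ?thesis unfolding densr using rho C by simp
          qed
          have ds0: "dens Msun R \<delta> \<gamma> s \<ge> 0"
          proof -
            have "(s/R) powr \<delta> \<le> 1" using ys d by (intro powr_le1) auto
            then show ?thesis unfolding densr using rho C by simp
          qed
          have s2: "(R/2)^2 \<le> s^2" using s0 r R by (intro power_mono) auto
          have R2: "(R/2)^2 > 0" using R by simp
          have "norm (G * mass Msun R \<delta> \<gamma> s * dens Msun R \<delta> \<gamma> s / s ^ 2) = G * \<bar>mass Msun R \<delta> \<gamma> s\<bar> * dens Msun R \<delta> \<gamma> s / s ^ 2"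
            using G ds0 by (simp add: abs_mult)
          also have "\<dots> \<le> G * B * dens Msun R \<delta> \<gamma> r / (R/2)^2"
          proof (rule frac_le)
            show "0 \<le> G * B * dens Msun R \<delta> \<gamma> r" using G B0 dr by simp
            show "G * \<bar>mass Msun R \<delta> \<gamma> s\<bar> * dens Msun R \<delta> \<gamma> s \<le> G * B * dens Msun R \<delta> \<gamma> r"
              using G mB[OF s0(1,2)] dsr ds0 B0 by (intro mult_mono mult_left_mono) auto
          qed (use R2 s2 in auto)
          finally show "norm (G * mass Msun R \<delta> \<gamma> s * dens Msun R \<delta> \<gamma> s / s ^ 2) \<le> Bd" unfolding Bd_def .
        qed simp
        then show ?thesis using r by simp
      qed
      have "\<bar>temp G Msun R \<mu> k NA \<delta> \<gamma> r\<bar> = \<mu> * \<bar>pres G Msun R \<delta> \<gamma> r\<bar> / (k * NA * dens Msun R \<delta> \<gamma> r)"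
        unfolding temp_def using mu kk NA dr by (simp add: abs_mult)
      also have "\<dots> \<le> \<mu> * (Bd * (R - r)) / (k * NA * dens Msun R \<delta> \<gamma> r)"
        using pb mu kk NA dr by (intro divide_right_mono mult_left_mono) auto
      also have "\<dots> = \<mu> * (G * B / (R/2)^2 * (R - r)) / (k * NA)"
        unfolding Bd_def using dr kk NA R by (simp add: field_simps)
      finally show ?thesis .
    qed
    show ?thesis
    proof (rule Lim_null_comparison)
      show "\<forall>\<^sub>F r in at_left R. norm (temp G Msun R \<mu> k NA \<delta> \<gamma> r) \<le> \<mu> * (G * B / (R/2)^2 * (R - r)) / (k * NA)"
        unfolding eventually_at_left[of "R/2" R, OF _] using R bound
        by (subst eventually_at_left[of "R/2"]) (auto intro!: exI[of _ "R/2"])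
      have "((\<lambda>r. \<mu> * (G * B / (R/2)^2 * (R - r)) / (k * NA)) \<longlongrightarrow> \<mu> * (G * B / (R/2)^2 * (R - R)) / (k * NA)) (at_left R)"
        using kk NA by (intro tendsto_intros) auto
      then show "((\<lambda>r. \<mu> * (G * B / (R/2)^2 * (R - r)) / (k * NA)) \<longlongrightarrow> 0) (at_left R)" by simp
    qed
  qed
  show ?thesis using part1 part2 by (simp add: Let_def)
qed

end
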